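(* Let $c,R>0$ and let $\Omega\subset\mathbb H^n$ be an open convex set with $B_H(0,cR)\subset\Omega$. Let $u:\overline\Omega\to\mathbb R$ be an $H$-convex function with $u\le0$ in $\Omega$. Let $\xi_1,\xi_2\in B_H(0,cR)$ with $\xi_2\in H_{\xi_1}$, and let $c_1,c_2\ge0$, $c_3>0$ be constants such that $N(\xi_1)\le c_1R$, $N(\xi_2)\le c_2R$, $d_H(\xi_1,\xi_2)\le c_3R$, $c_1+c_3<c$ and $c_2+c_3<c$. Then $$\frac{c-c_1-c_3}{c-c_1}\,u(\xi_1)\ge u(\xi_2)\ge\frac{c-c_2}{c-c_2-c_3}\,u(\xi_1).$$
   Context: $\mathbb H^n=\mathbb C^n\times\mathbb R\cong\mathbb R^{2n+1}$ with real coordinates $(x,y,t)$, $z=x+iy$, group law $(z,t)\circ(z',t')=(z+z',t+t'+2\,\mathrm{Im}\langle z,z'\rangle)$, $\langle z,z'\rangle=\sum_j z_j\overline{z'_j}$. Dilations $\delta_\lambda(z,t)=(\lambda z,\lambda^2t)$. Horizontal plane at $\xi_0=(x_0,y_0,t_0)$: $H_{\xi_0}=\{(x,y,t):t=t_0+2(x\cdot y_0-x_0\cdot y)\}$. Gauge $N(z,t)=(|z|^4+t^2)^{1/4}$, $d_H(\xi,\zeta)=N(\zeta^{-1}\circ\xi)$, $B_H(\xi,r)=\{\zeta:d_H(\zeta,\xi)<r\}$. A function $u$ on an $H$-convex set $\tilde\Omega$ is $H$-convex if $u(\xi_1\circ\delta_\lambda(\xi_1^{-1}\circ\xi_2))\le(1-\lambda)u(\xi_1)+\lambda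 u(\xi_2)$ for all $\xi_1,\xi_2\in\tilde\Omega$ with $\xi_1\in H_{\xi_2}$, $\lambda\in[0,1]$. *)

theory Defs
  imports "HOL-Analysis.Analysis"
begin

text \<open>Points of H^n = C^n x R, written as (x, y, t) with z = x + i y, x, y in R^n.\<close>
type_synonym 'n hpoint = "(real^'n) \<times> (real^'n) \<times> real"

definition hmult :: "'n::finite hpoint \<Rightarrow> 'n hpoint \<Rightarrow> 'n hpoint" (infixl "\<circ>\<^sub>H" 70) where
  "hmult p q = (case p of (x, y, t) \<Rightarrow> case q of (x', y', t') \<Rightarrow>
     (x + x', y + y', t + t' + 2 * (y \<bullet> x' - x \<bullet> y')))"
  \<comment> \<open>2 Im<z,z'> = 2 (y.x' - x.y')\<close>

definition hinv :: "'n::finite hpoint \<Rightarrow> 'n hpoint" where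
  "hinv p = (case p of (x, y, t) \<Rightarrow> (- x, - y, - t))"

definition hdil :: "real \<Rightarrow> 'n::finite hpoint \<Rightarrow> 'n hpoint" where
  "hdil l p = (case p of (x, y, t) \<Rightarrow> (l *\<^sub>R x, l *\<^sub>R y, l\<^sup>2 * t))"

definition hplane :: "'n::finite hpoint \<Rightarrow> 'n hpoint set" where
  "hplane p0 = (case p0 of (x0, y0, t0) \<Rightarrow>
     {(x, y, t). t = t0 + 2 * (x \<bullet> y0 - x0 \<bullet> y)})"

definition gauge :: "'n::finite hpoint \<Rightarrow> real" where
  "gauge p = (case p of (x, y, t) \<Rightarrow>
     ((norm x ^ 2 + norm y ^ 2) ^ 2 + t ^ 2) powr (1/4))"

definition hdist :: "'n::finite hpoint \<Rightarrow> 'n hpoint \<Rightarrow> real" where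
  "hdist p q = gauge (hinv q \<circ>\<^sub>H p)"

definition hball :: "'n::finite hpoint \<Rightarrow> real \<Rightarrow> 'n hpoint set" where
  "hball p r = {q. hdist q p < r}"

definition hconvex_set :: "'n::finite hpoint set \<Rightarrow> bool" where
  "hconvex_set S \<longleftrightarrow> (\<forall>p1\<in>S. \<forall>p2\<in>S. p1 \<in> hplane p2 \<longrightarrow>
     (\<forall>l\<in>{0..1}. p1 \<circ>\<^sub>H hdil l (hinv p1 \<circ>\<^sub>H p2) \<in> S))"

definition hconvex_on :: "'n::finite hpoint set \<Rightarrow> ('n hpoint \<Rightarrow> real) \<Rightarrow> bool" where
  "hconvex_on S u \<longleftrightarrow> hconvex_set S \<and> (\<forall>p1\<in>S. \<forall>p2\<in>S. p1 \<in> hplane p2 \<longrightarrow>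
     (\<forall>l\<in>{0..1}. u (p1 \<circ>\<^sub>H hdil l (hinv p1 \<circ>\<^sub>H p2)) \<le> (1 - l) * u p1 + l * u p2))"

end

theory Submission
  imports Defs
begin


lemma powr4: "0 \<le> (X::real) \<Longrightarrow> X powr (1/4) = sqrt (sqrt X)"
proof -
  assume h: "0 \<le> X"
  have "sqrt (sqrt X) = (X powr (1/2)) powr (1/2)"
    using h by (simp add: powr_half_sqrt)
  also have "\<dots> = X powr (1/4)" by (simp add: powr_powr)
  finally show ?thesis by simp
qed

lemma cs2:
  fixes x y a b :: "real^'n::finite"
  shows "(x \<bullet> a + y \<bullet> b)\<^sup>2 + (y \<bullet> a - x \<bullet> b)\<^sup>2 \<le> (x \<bullet> x + y \<bullet> y) * (a \<bullet> a + b \<bullet> b)"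
proof -
  define P where "P = x \<bullet> a + y \<bullet> b"
  define Q where "Q = y \<bullet> a - x \<bullet> b"
  define W where "W = a \<bullet> a + b \<bullet> b"
  define S where "S = x \<bullet> x + y \<bullet> y"
  have W0: "W \<ge> 0" unfolding W_def by simp
  have "0 \<le> (W *\<^sub>R x - P *\<^sub>R a + Q *\<^sub>R b) \<bullet> (W *\<^sub>R x - P *\<^sub>R a + Q *\<^sub>R b)
      + (W *\<^sub>R y - P *\<^sub>R b - Q *\<^sub>R a) \<bullet> (W *\<^sub>R y - P *\<^sub>R b - Q *\<^sub>R a)"
    by simp
  also have "\<dots> = W * (W * S - P\<^sup>2 - Q\<^sup>2)"
    unfolding P_def Q_def W_def S_def
    by (simp add: inner_add_left inner_add_right inner_diff_left inner_diff_right inner_commute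
        power2_eq_square algebra_simps)
  finally have *: "0 \<le> W * (W * S - P\<^sup>2 - Q\<^sup>2)" .
  show ?thesis
  proof (cases "W = 0")
    case True
    then have "a = 0" "b = 0" unfolding W_def
      by (smt (verit) inner_ge_zero inner_eq_zero_iff)+
    then show ?thesis by simp
  next
    case False
    with W0 have "W > 0" by simp
    with * have "0 \<le> W * S - P\<^sup>2 - Q\<^sup>2"
      by (simp add: zero_le_mult_iff)
    then show ?thesis unfolding P_def Q_def W_def S_def by (simp add: algebra_simps)
  qed
qed

lemma gauge_step:
  fixes x y a b :: "real^'n::finite"
  shows "gauge (x + a, y + b, t + 2*(y \<bullet> a - x \<bullet> b)) \<le> gauge (x,y,t) + sqrt (a \<bullet> a + b \<bullet> b)"
proof -
  define P where "P = x \<bullet> a + y \<bullet> b"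
  define Q where "Q = y \<bullet> a - x \<bullet> b"
  define W where "W = a \<bullet> a + b \<bullet> b"
  define S where "S = x \<bullet> x + y \<bullet> y"
  define M where "M = sqrt (S\<^sup>2 + t\<^sup>2)"
  have S0: "S \<ge> 0" and W0: "W \<ge> 0" unfolding S_def W_def by simp_all
  have M0: "M \<ge> 0" unfolding M_def by simp
  have cs: "P\<^sup>2 + Q\<^sup>2 \<le> S * W" unfolding P_def Q_def S_def W_def by (rule cs2)
  have Sq: "(x + a) \<bullet> (x + a) + (y + b) \<bullet> (y + b) = S + W + 2 * P"
    unfolding S_def W_def P_def by (simp add: inner_add_left inner_add_right inner_commute algebra_simps)
  have g1: "gauge (x + a, y + b, t + 2*(y \<bullet> a - x \<bullet> b)) = sqrt (sqrt ((S + W + 2*P)\<^sup>2 + (t + 2*Q)\<^sup>2))"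
    unfolding gauge_def using Sq by (simp add: power2_norm_eq_inner powr4 Q_def)
  have g2: "gauge (x,y,t) = sqrt M"
    unfolding gauge_def M_def S_def by (simp add: power2_norm_eq_inner powr4)
  have e1: "sqrt ((S + W + 2*P)\<^sup>2 + (t + 2*Q)\<^sup>2) \<le> M + sqrt ((W + 2*P)\<^sup>2 + (2*Q)\<^sup>2)"
  proof -
    have "S + W + 2*P = S + (W + 2*P)" by simp
    then show ?thesis unfolding M_def
      using real_sqrt_sum_squares_triangle_ineq[of S "W+2*P" t "2*Q"] by presburger
  qed
  have e2: "sqrt ((W + 2*P)\<^sup>2 + (2*Q)\<^sup>2) \<le> sqrt (W\<^sup>2 + 0\<^sup>2) + sqrt ((2*P)\<^sup>2 + (2*Q)\<^sup>2)"
    using real_sqrt_sum_squares_triangle_ineq[of W "2*P" 0 "2*Q"] by (simp only: add_0_left)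
  have e3: "sqrt ((2*P)\<^sup>2 + (2*Q)\<^sup>2) = 2 * sqrt (P\<^sup>2 + Q\<^sup>2)"
  proof -
    have "(2*P)\<^sup>2 + (2*Q)\<^sup>2 = 2\<^sup>2 * (P\<^sup>2 + Q\<^sup>2)" by (simp add: algebra_simps power2_eq_square)
    then have "sqrt ((2*P)\<^sup>2 + (2*Q)\<^sup>2) = sqrt (2\<^sup>2) * sqrt (P\<^sup>2 + Q\<^sup>2)"
      by (simp only: real_sqrt_mult)
    then show ?thesis by simp
  qed
  have e4: "sqrt (P\<^sup>2 + Q\<^sup>2) \<le> sqrt M * sqrt W"
  proof -
    have "sqrt (P\<^sup>2 + Q\<^sup>2) \<le> sqrt S * sqrt W"
      using cs by (metis real_sqrt_le_mono real_sqrt_mult)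
    moreover have "sqrt S \<le> sqrt M"
    proof -
      have "S = sqrt (S\<^sup>2)" using S0 by simp
      also have "\<dots> \<le> M" unfolding M_def by simp
      finally show ?thesis by simp
    qed
    then have "sqrt S * sqrt W \<le> sqrt M * sqrt W" using W0 by (simp add: mult_right_mono)
    ultimately show ?thesis by linarith
  qed
  have e5: "sqrt (W\<^sup>2 + 0\<^sup>2) = W" using W0 by simp
  have "sqrt ((S + W + 2*P)\<^sup>2 + (t + 2*Q)\<^sup>2) \<le> M + (W + 2 * (sqrt M * sqrt W))"
    using e1 e2 e3 e4 e5 by linarith
  also have "\<dots> = (sqrt M + sqrt W)\<^sup>2"
    using W0 M0 by (simp add: power2_eq_square algebra_simps)
  finally have "sqrt (sqrt ((S + W + 2*P)\<^sup>2 + (t + 2*Q)\<^sup>2)) \<le> sqrt ((sqrt M + sqrt W)\<^sup>2)"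
    by (rule real_sqrt_le_mono)
  then have "sqrt (sqrt ((S + W + 2*P)\<^sup>2 + (t + 2*Q)\<^sup>2)) \<le> sqrt M + sqrt W"
    using W0 M0 by simp
  then show ?thesis using g1 g2 W_def by simp
qed



lemma hball0: "q \<in> hball 0 r \<longleftrightarrow> gauge q < r"
  by (cases q) (simp add: hball_def hdist_def hinv_def hmult_def zero_prod_def)

lemma one_side:
  fixes \<Omega> :: "'n::finite hpoint set" and u :: "'n hpoint \<Rightarrow> real"
    and c R c1 c3 :: real and p1 p2 :: "'n hpoint"
  assumes conv: "hconvex_on (closure \<Omega>) u" and ball: "hball 0 (c * R) \<subseteq> \<Omega>"
    and neg: "\<forall>p\<in>\<Omega>. u p \<le> 0"
    and p1in: "p1 \<in> hball 0 (c * R)" and pl: "p2 \<in> hplane p1"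
    and "c1 \<ge> 0" "c3 > 0" "R > 0"
    and g1: "gauge p1 \<le> c1 * R" and hd: "hdist p1 p2 \<le> c3 * R" and cc: "c1 + c3 < c"
  shows "u p2 \<le> (c - c1 - c3) / (c - c1) * u p1"
proof -
  obtain x1 y1 t1 where p1: "p1 = (x1, y1, t1)" by (cases p1) auto
  obtain x2 y2 t2 where p2: "p2 = (x2, y2, t2)" by (cases p2) auto
  define a where "a = x2 - x1"
  define b where "b = y2 - y1"
  have x2: "x2 = x1 + a" and y2: "y2 = y1 + b" unfolding a_def b_def by simp_all
  have t2: "t2 = t1 + 2 * (y1 \<bullet> a - x1 \<bullet> b)"
    using pl unfolding p1 p2 hplane_def a_def b_def
    by (simp add: inner_diff_left inner_diff_right inner_commute algebra_simps)
  define d where "d = sqrt (a \<bullet> a + b \<bullet> b)"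
  have "hinv p2 \<circ>\<^sub>H p1 = (- a, - b, 0)"
    unfolding p1 p2 x2 y2 t2 hinv_def hmult_def
    by (simp add: inner_add_left inner_add_right inner_commute algebra_simps)
  then have hdd: "hdist p1 p2 = d"
    unfolding hdist_def gauge_def d_def by (simp add: power2_norm_eq_inner powr4)
  have d0: "d \<ge> 0" unfolding d_def by simp
  have p1O: "p1 \<in> \<Omega>" using p1in ball by blast
  define U where "U = u p1"
  have U0: "U \<le> 0" using neg p1O U_def by simp
  define L where "L = (c - c1) / c3"
  have L1: "L > 1" unfolding L_def using cc \<open>c3 > 0\<close> by (simp add: field_simps)
  have key: "u p2 \<le> (1 - 1/lam) * U" if lam1: "1 < lam" and lamL: "lam < L" for lam
  proof -
    define p3 where "p3 = (x1 + lam *\<^sub>R a, y1 + lam *\<^sub>R b, t1 + 2 * (y1 \<bullet> (lam *\<^sub>R a) - x1 \<bullet> (lam *\<^sub>R b)))"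
    have "gauge p3 \<le> gauge p1 + sqrt ((lam *\<^sub>R a) \<bullet> (lam *\<^sub>R a) + (lam *\<^sub>R b) \<bullet> (lam *\<^sub>R b))"
      unfolding p3_def p1 by (rule gauge_step)
    also have "sqrt ((lam *\<^sub>R a) \<bullet> (lam *\<^sub>R a) + (lam *\<^sub>R b) \<bullet> (lam *\<^sub>R b)) = lam * d"
    proof -
      have "(lam *\<^sub>R a) \<bullet> (lam *\<^sub>R a) + (lam *\<^sub>R b) \<bullet> (lam *\<^sub>R b) = lam\<^sup>2 * (a \<bullet> a + b \<bullet> b)"
        by (simp add: power2_eq_square algebra_simps)
      then show ?thesis unfolding d_def using lam1 by (simp add: real_sqrt_mult)
    qed
    finally have g3: "gauge p3 \<le> gauge p1 + lam * d" .
    have "lam * d \<le> lam * (c3 * R)" using hd hdd lam1 by (simp add: mult_left_mono)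
    also have "lam * (c3 * R) < L * (c3 * R)" using lamL \<open>c3 > 0\<close> \<open>R > 0\<close> by simp
    also have "L * (c3 * R) = (c - c1) * R" unfolding L_def using \<open>c3 > 0\<close> by simp
    finally have "gauge p3 < c * R" using g3 g1 by (simp add: algebra_simps)
    then have p3O: "p3 \<in> \<Omega>" using ball hball0 by blast
    have pl3: "p1 \<in> hplane p3"
      unfolding p1 p3_def hplane_def by (simp add: algebra_simps inner_commute)
    have l01: "1/lam \<in> {0..1}" using lam1 by simp
    have eq: "p1 \<circ>\<^sub>H hdil (1/lam) (hinv p1 \<circ>\<^sub>H p3) = p2"
      unfolding p1 p2 p3_def x2 y2 t2 hinv_def hmult_def hdil_def using lam1
      by (simp add: algebra_simps inner_commute)
    have "u p2 \<le> (1 - 1/lam) * u p1 + (1/lam) * u p3"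
      using conv p1O p3O pl3 l01 closure_subset[of \<Omega>] unfolding hconvex_on_def eq[symmetric]
      by blast
    moreover have "u p3 \<le> 0" using neg p3O by simp
    moreover have "1/lam > 0" using lam1 by simp
    ultimately show ?thesis unfolding U_def by (smt (verit) mult_nonneg_nonpos)
  qed
  have kL: "(c - c1 - c3) / (c - c1) = 1 - 1/L"
    unfolding L_def using cc \<open>c3 > 0\<close> by (simp add: field_simps)
  show ?thesis
  proof (cases "U = 0")
    case True
    have "u p2 \<le> (1 - 1/((1+L)/2)) * U" by (rule key) (use L1 in auto)
    then show ?thesis using True U_def by simp
  next
    case False
    then have Un: "U < 0" using U0 by simp
    define h where "h = (u p2 - U) / (- U)"
    have "h \<le> 1/L"
    proof (rule dense_ge_bounded[where x=1])
      show "1/L < 1" using L1 by simp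
    next
      fix w assume w1: "1/L < w" and w2: "w < 1"
      have wpos: "w > 0" using w1 L1 by (smt (verit) divide_pos_pos)
      have "1 < 1/w" using w2 wpos by (simp add: field_simps)
      moreover have "1/w < L" using w1 wpos L1 by (simp add: field_simps)
      ultimately have "u p2 \<le> (1 - 1/(1/w)) * U" by (rule key)
      then have "u p2 - U \<le> w * (- U)" by (simp add: algebra_simps)
      moreover have "- U > 0" using Un by simp
      ultimately show "h \<le> w" unfolding h_def by (simp only: pos_divide_le_eq)
    qed
    moreover have "- U > 0" using Un by simp
    ultimately have "u p2 - U \<le> (1/L) * (- U)" unfolding h_def by (simp only: pos_divide_le_eq)
    then show ?thesis unfolding kL U_def by (simp add: algebra_simps)
  qed
qed

lemma hplane_sym: "p \<in> hplane q \<Longrightarrow> q \<in> hplane p"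
  by (cases p; cases q) (auto simp: hplane_def algebra_simps inner_commute)

lemma hdist_sym: "hdist p q = hdist q p"
  by (cases p; cases q) (simp add: hdist_def hinv_def hmult_def gauge_def norm_minus_commute power2_commute algebra_simps inner_commute)


theorem lemma6p6:
  fixes \<Omega> :: "'n::finite hpoint set" and u :: "'n hpoint \<Rightarrow> real"
    and c R c1 c2 c3 :: real and p1 p2 :: "'n hpoint"
  assumes "c > 0" "R > 0"
    and "open \<Omega>" "convex \<Omega>" "hball 0 (c * R) \<subseteq> \<Omega>"
    and "hconvex_on (closure \<Omega>) u"
    and "\<forall>p\<in>\<Omega>. u p \<le> 0"
    and "p1 \<in> hball 0 (c * R)" "p2 \<in> hball 0 (c * R)" "p2 \<in> hplane p1"
    and "c1 \<ge> 0" "c2 \<ge> 0" "c3 > 0"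
    and "gauge p1 \<le> c1 * R" "gauge p2 \<le> c2 * R" "hdist p1 p2 \<le> c3 * R"
    and "c1 + c3 < c" "c2 + c3 < c"
  shows "(c - c1 - c3) / (c - c1) * u p1 \<ge> u p2
       \<and> u p2 \<ge> (c - c2) / (c - c2 - c3) * u p1"
proof
  show "(c - c1 - c3) / (c - c1) * u p1 \<ge> u p2"
    by (rule one_side[of \<Omega> u c R p1 p2 c1 c3]) (use assms in auto)
  have h: "u p1 \<le> (c - c2 - c3) / (c - c2) * u p2"
    by (rule one_side[of \<Omega> u c R p2 p1 c2 c3])
       (use assms hplane_sym[OF assms(10)] hdist_sym[of p1 p2] in auto)
  have pos: "(c - c2 - c3) / (c - c2) > 0" using assms by simp
  have "(c - c2) / (c - c2 - c3) * u p1 \<le> (c - c2) / (c - c2 - c3) * ((c - c2 - c3) / (c - c2) * u p2)"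
    using h assms by (intro mult_left_mono) auto
  also have "\<dots> = u p2"
  proof -
    have "c - c2 \<noteq> 0" "c - c2 - c3 \<noteq> 0" using assms by auto
    then show ?thesis by simp
  qed
  finally show "u p2 \<ge> (c - c2) / (c - c2 - c3) * u p1" .
qed

end
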